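(* Let $X$ be a nonnegative random variable with support $(0,+\infty)$, having finite CIGF $G_X(\alpha,\beta)$ for $(\alpha,\beta)\in D_X$. Assume the moment generating function $M_X(s)=\mathbb{E}(e^{sX})$ satisfies $M_X(s)<+\infty$ for all $s\in(-s_0,s_0)$, for some $s_0>0$. Then: (i) for all $s_1\in(-s_0,0)$, $s_2\in(0,s_0)$ and $(\alpha,\beta)\in D_X$ with $\alpha>0,\beta>0$ and $\alpha s_1+\beta s_2>0$, $$G_X(\alpha,\beta)\le\frac{1}{\alpha s_1+\beta s_2}[M_X(s_1)]^\alpha[M_X(s_2)]^\beta;$$ (ii) for all $s_1\in(-s_0,0)$, $s_2\in(0,s_0)$ and $(\alpha,\beta)\in D_X$ with $\alpha<0,\beta<0$ and $\alpha s_1+\beta s_2>0$, $$G_X(\alpha,\beta)\ge\frac{1}{\alpha s_1+\beta s_2}[M_X(s_1)]^\alpha[M_X(s_2)]^\beta.$$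
   Context: For a random variable $X$ with CDF $F$ and survival function $\overline F=1-F$, let $l=\inf\{x:F(x)>0\}$, $r=\sup\{x:\overline F(x)>0\}$. The CIGF of $X$ is $G_X(\alpha,\beta)=\int_l^r [F(x)]^\alpha[\overline F(x)]^\beta\,dx$ on $D_X=\{(\alpha,\beta)\in\mathbb{R}^2: G_X(\alpha,\beta)<\infty\}$. *)

theory Defs
  imports "HOL-Probability.Probability"
begin

definition rv_cdf :: "'a measure \<Rightarrow> ('a \<Rightarrow> real) \<Rightarrow> real \<Rightarrow> real" where
  "rv_cdf M X x = measure M {w \<in> space M. X w \<le> x}"

definition rv_surv :: "'a measure \<Rightarrow> ('a \<Rightarrow> real) \<Rightarrow> real \<Rightarrow> real" where
  "rv_surv M X x = 1 - rv_cdf M X x"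

definition cigf_l :: "'a measure \<Rightarrow> ('a \<Rightarrow> real) \<Rightarrow> ereal" where
  "cigf_l M X = Inf {ereal x | x. rv_cdf M X x > 0}"

definition cigf_r :: "'a measure \<Rightarrow> ('a \<Rightarrow> real) \<Rightarrow> ereal" where
  "cigf_r M X = Sup {ereal x | x. rv_surv M X x > 0}"

definition cigf_ext :: "'a measure \<Rightarrow> ('a \<Rightarrow> real) \<Rightarrow> real \<Rightarrow> real \<Rightarrow> ennreal" where
  "cigf_ext M X \<alpha> \<beta> =
     (\<integral>\<^sup>+ x. indicator {x. cigf_l M X < ereal x \<and> ereal x < cigf_r M X} x *
        ennreal (rv_cdf M X x powr \<alpha> * rv_surv M X x powr \<beta>) \<partial>lborel)"

definition cigf_domain :: "'a measure \<Rightarrow> ('a \<Rightarrow> real) \<Rightarrow> (real \<times> real) set" where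
  "cigf_domain M X = {(\<alpha>, \<beta>). cigf_ext M X \<alpha> \<beta> < \<infinity>}"

definition cigf :: "'a measure \<Rightarrow> ('a \<Rightarrow> real) \<Rightarrow> real \<Rightarrow> real \<Rightarrow> real" where
  "cigf M X \<alpha> \<beta> = enn2real (cigf_ext M X \<alpha> \<beta>)"

definition mgf :: "'a measure \<Rightarrow> ('a \<Rightarrow> real) \<Rightarrow> real \<Rightarrow> real" where
  "mgf M X s = (\<integral> w. exp (s * X w) \<partial>M)"

end

theory Submission
  imports Defs
begin

lemma exp_int:
  fixes c K :: real
  assumes "c > 0" "K \<ge> 0"
  shows "(\<integral>\<^sup>+ x. indicator {x. 0 < x} x * ennreal (K * exp (-c*x)) \<partial>lborel) = ennreal (K / c)"
proof -
  have h0: "((\<lambda>x. exp (-c*x)) has_integral exp (-c*0)/c) {0..}"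
    by (rule has_integral_exp_minus_to_infinity[OF assms(1)])
  have h1: "((\<lambda>x. K * exp (-c*x)) has_integral K * (1/c)) {0..}"
    using has_integral_mult_right[OF h0, of K] by simp
  have h2: "((\<lambda>x. K * exp (-c*x)) has_integral K * (1/c)) {0<..}"
  proof -
    have "negligible {0::real}" by simp
    show ?thesis
      by (rule iffD1[OF has_integral_spike_set_eq h1])
         (auto intro: negligible_subset[OF \<open>negligible {0::real}\<close>])
  qed
  have "(\<integral>\<^sup>+ x. ennreal (indicator {0<..} x * (K * exp (-c*x))) \<partial>lborel) = ennreal (K * (1/c))"
    by (rule nn_integral_has_integral_lebesgue[OF _ h2]) (use assms in auto)
  moreover have "\<And>x. ennreal (indicator {0<..} x * (K * exp (-c*x))) = indicator {x. 0 < x} x * ennreal (K * exp (-c*x))"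
    by (auto split: split_indicator)
  ultimately show ?thesis by simp
qed

lemma chernoff_F:
  assumes "prob_space M" "X \<in> borel_measurable M" "s < 0" "integrable M (\<lambda>w. exp (s * X w))"
  shows "rv_cdf M X x \<le> mgf M X s * exp (-s*x)"
proof -
  interpret prob_space M by fact
  have meas: "{w \<in> space M. X w \<le> x} \<in> sets M" using assms(2) by measurable
  have "rv_cdf M X x = (\<integral>w. indicator {w \<in> space M. X w \<le> x} w \<partial>M)"
    unfolding rv_cdf_def using meas by simp
  also have "\<dots> \<le> (\<integral>w. exp (s * X w) * exp (-s*x) \<partial>M)"
  proof (rule integral_mono)
    show "integrable M (indicat_real {w \<in> space M. X w \<le> x})"
      using meas by (intro integrable_real_indicator) (auto simp: less_top[symmetric])
    show "integrable M (\<lambda>w. exp (s * X w) * exp (- s * x))" using assms(4) by simp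
    fix w assume "w \<in> space M"
    show "indicat_real {w \<in> space M. X w \<le> x} w \<le> exp (s * X w) * exp (- s * x)"
    proof (cases "X w \<le> x")
      case True
      then have "s * X w + - s * x \<ge> 0" using assms(3)
        by (metis add.commute diff_ge_0_iff_ge minus_mult_left mult_le_cancel_left_neg uminus_add_conv_diff)
      then have "exp (s * X w) * exp (- s * x) \<ge> 1" by (simp add: mult_exp_exp)
      then show ?thesis by (auto split: split_indicator)
    qed (auto split: split_indicator)
  qed
  also have "\<dots> = mgf M X s * exp (-s*x)" unfolding mgf_def by simp
  finally show ?thesis .
qed

lemma chernoff_S:
  assumes "prob_space M" "X \<in> borel_measurable M" "s > 0" "integrable M (\<lambda>w. exp (s * X w))"
  shows "rv_surv M X x \<le> mgf M X s * exp (-s*x)"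
proof -
  interpret prob_space M by fact
  have meas: "{w \<in> space M. X w \<le> x} \<in> sets M" using assms(2) by measurable
  have ii: "integrable M (indicat_real {w \<in> space M. X w \<le> x})"
    using meas by (intro integrable_real_indicator) (auto simp: less_top[symmetric])
  have "rv_surv M X x = (\<integral>w. 1 - indicat_real {w \<in> space M. X w \<le> x} w \<partial>M)"
    using Bochner_Integration.integral_diff[OF _ ii, of "\<lambda>_. 1"] meas
    unfolding rv_surv_def rv_cdf_def by (simp add: prob_space Int_absorb2 sets.sets_into_space)
  also have "\<dots> \<le> (\<integral>w. exp (s * X w) * exp (-s*x) \<partial>M)"
  proof (rule integral_mono)
    show "integrable M (\<lambda>w. 1 - indicat_real {w \<in> space M. X w \<le> x} w)"
      using meas by (intro Bochner_Integration.integrable_diff integrable_real_indicator) (auto simp: less_top[symmetric])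
    show "integrable M (\<lambda>w. exp (s * X w) * exp (- s * x))" using assms(4) by simp
    fix w assume "w \<in> space M"
    show "1 - indicat_real {w \<in> space M. X w \<le> x} w \<le> exp (s * X w) * exp (- s * x)"
    proof (cases "X w \<le> x")
      case False
      then have "s * X w + - s * x \<ge> 0" using assms(3)
        by (simp add: algebra_simps)
      then have "exp (s * X w) * exp (- s * x) \<ge> 1" by (simp add: mult_exp_exp)
      then show ?thesis using \<open>w \<in> space M\<close> False by (auto split: split_indicator)
    qed (use \<open>w \<in> space M\<close> in \<open>auto split: split_indicator\<close>)
  qed
  also have "\<dots> = mgf M X s * exp (-s*x)" unfolding mgf_def by simp
  finally show ?thesis .
qed

lemma F_pos:
  assumes "prob_space M" "X \<in> borel_measurable M" "cigf_l M X = 0" "x > 0"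
  shows "rv_cdf M X x > 0"
proof -
  interpret prob_space M by fact
  have "Inf {ereal x | x. rv_cdf M X x > 0} < ereal x" using assms(3,4) unfolding cigf_l_def by simp
  then obtain y where y: "rv_cdf M X y > 0" "ereal y < ereal x" by (auto simp: Inf_less_iff)
  have "rv_cdf M X y \<le> rv_cdf M X x"
    unfolding rv_cdf_def using y(2) assms(2)
    by (intro finite_measure_mono) auto
  then show ?thesis using y by simp
qed

lemma S_pos:
  assumes "prob_space M" "X \<in> borel_measurable M" "cigf_r M X = \<infinity>"
  shows "rv_surv M X x > 0"
proof -
  interpret prob_space M by fact
  have "ereal x < Sup {ereal x | x. rv_surv M X x > 0}" using assms(3) unfolding cigf_r_def by simp
  then obtain y where y: "rv_surv M X y > 0" "ereal x < ereal y" by (auto simp: less_Sup_iff)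
  have "rv_cdf M X x \<le> rv_cdf M X y"
    unfolding rv_cdf_def using y(2) assms(2)
    by (intro finite_measure_mono) auto
  then show ?thesis using y by (simp add: rv_surv_def)
qed

lemma F_le1:
  assumes "prob_space M"
  shows "rv_cdf M X x \<le> 1" "rv_cdf M X x \<ge> 0"
  using prob_space.prob_le_1[OF assms] unfolding rv_cdf_def by auto

theorem corollary1:
  fixes M :: "'a measure" and X :: "'a \<Rightarrow> real" and s0 :: real
  assumes "prob_space M"
    and "X \<in> borel_measurable M"
    and "AE w in M. X w \<ge> 0"
    and "cigf_l M X = 0" and "cigf_r M X = \<infinity>"
    and "s0 > 0"
    and "\<And>s. s \<in> {-s0<..<s0} \<Longrightarrow> integrable M (\<lambda>w. exp (s * X w))"
  shows "(\<forall>s1 \<in> {-s0<..<0}. \<forall>s2 \<in> {0<..<s0}. \<forall>\<alpha> \<beta>.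
            (\<alpha>, \<beta>) \<in> cigf_domain M X \<and> \<alpha> > 0 \<and> \<beta> > 0 \<and> \<alpha> * s1 + \<beta> * s2 > 0 \<longrightarrow>
              cigf M X \<alpha> \<beta> \<le> (1 / (\<alpha> * s1 + \<beta> * s2)) * (mgf M X s1 powr \<alpha>) * (mgf M X s2 powr \<beta>))
       \<and> (\<forall>s1 \<in> {-s0<..<0}. \<forall>s2 \<in> {0<..<s0}. \<forall>\<alpha> \<beta>.
            (\<alpha>, \<beta>) \<in> cigf_domain M X \<and> \<alpha> < 0 \<and> \<beta> < 0 \<and> \<alpha> * s1 + \<beta> * s2 > 0 \<longrightarrow>
              cigf M X \<alpha> \<beta> \<ge> (1 / (\<alpha> * s1 + \<beta> * s2)) * (mgf M X s1 powr \<alpha>) * (mgf M X s2 powr \<beta>))"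
proof -
  have setI: "{x. cigf_l M X < ereal x \<and> ereal x < cigf_r M X} = {x. 0 < x}"
    using assms(4,5) by auto
  have ext: "cigf_ext M X a b = (\<integral>\<^sup>+ x. indicator {x. 0 < x} x *
        ennreal (rv_cdf M X x powr a * rv_surv M X x powr b) \<partial>lborel)" for a b
    unfolding cigf_ext_def setI ..
  have Fp: "x > 0 \<Longrightarrow> rv_cdf M X x > 0" for x using F_pos[OF assms(1,2,4)] .
  have Sp: "rv_surv M X x > 0" for x using S_pos[OF assms(1,2,5)] .
  have F1: "rv_cdf M X x \<le> 1" for x using F_le1[OF assms(1)] by blast
  have S1: "rv_surv M X x \<le> 1" for x using F_le1[OF assms(1)] unfolding rv_surv_def by auto
  have key: "rv_cdf M X x \<le> mgf M X s1 * exp (-s1*x) \<and> rv_surv M X x \<le> mgf M X s2 * exp (-s2*x)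
     \<and> mgf M X s1 > 0 \<and> mgf M X s2 > 0"
    if "s1 \<in> {-s0<..<0}" "s2 \<in> {0<..<s0}" for s1 s2 x
  proof -
    have i1: "integrable M (\<lambda>w. exp (s1 * X w))" using assms(7) that by auto
    have i2: "integrable M (\<lambda>w. exp (s2 * X w))" using assms(7) that by auto
    have c1: "rv_cdf M X y \<le> mgf M X s1 * exp (-s1*y)" for y
      using chernoff_F[OF assms(1,2) _ i1] that by auto
    have c2: "rv_surv M X y \<le> mgf M X s2 * exp (-s2*y)" for y
      using chernoff_S[OF assms(1,2) _ i2] that by auto
    have "0 < mgf M X s1 * exp (-s1*1)" using c1[of 1] Fp[of 1] by linarith
    then have m1: "mgf M X s1 > 0" by (simp add: zero_less_mult_iff)
    have "0 < mgf M X s2 * exp (-s2*1)" using c2[of 1] Sp[of 1] by linarith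
    then have m2: "mgf M X s2 > 0" by (simp add: zero_less_mult_iff)
    show ?thesis using c1 c2 m1 m2 by blast
  qed
  show ?thesis
  proof (intro conjI ballI allI impI)
    fix s1 s2 a b
    assume s1: "s1 \<in> {-s0<..<0}" and s2: "s2 \<in> {0<..<s0}"
      and H: "(a, b) \<in> cigf_domain M X \<and> 0 < a \<and> 0 < b \<and> 0 < a * s1 + b * s2"
    define c where "c = a * s1 + b * s2"
    define K where "K = mgf M X s1 powr a * mgf M X s2 powr b"
    have K0: "K \<ge> 0" unfolding K_def by simp
    have pt: "rv_cdf M X x powr a * rv_surv M X x powr b \<le> K * exp (-c*x)" if "x > 0" for x
    proof -
      have k: "rv_cdf M X x \<le> mgf M X s1 * exp (-s1*x)" "rv_surv M X x \<le> mgf M X s2 * exp (-s2*x)"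
        "mgf M X s1 > 0" "mgf M X s2 > 0" using key[OF s1 s2, of x] by auto
      have p1: "rv_cdf M X x powr a \<le> (mgf M X s1 * exp (-s1*x)) powr a"
        using k(1) Fp[OF that] H by (intro powr_mono2) auto
      have p2: "rv_surv M X x powr b \<le> (mgf M X s2 * exp (-s2*x)) powr b"
        using k(2) Sp[of x] H by (intro powr_mono2) auto
      have "rv_cdf M X x powr a * rv_surv M X x powr b \<le> (mgf M X s1 * exp (-s1*x)) powr a * (mgf M X s2 * exp (-s2*x)) powr b"
        using p1 p2 by (intro mult_mono) auto
      also have "\<dots> = K * exp (-c*x)"
        using k(3,4) unfolding K_def c_def
        by (simp add: powr_mult exp_powr_real algebra_simps flip: exp_add)
      finally show ?thesis .
    qed
    have "cigf_ext M X a b \<le> (\<integral>\<^sup>+ x. indicator {x. 0 < x} x * ennreal (K * exp (-c*x)) \<partial>lborel)"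
      unfolding ext
      using pt by (intro nn_integral_mono) (auto split: split_indicator intro!: ennreal_leI)
    also have "\<dots> = ennreal (K / c)" using exp_int[of c K] H K0 unfolding c_def by simp
    finally have "cigf M X a b \<le> enn2real (ennreal (K / c))"
      unfolding cigf_def by (intro enn2real_mono) auto
    also have "\<dots> = K / c" using K0 H unfolding c_def by simp
    finally show "cigf M X a b \<le> 1 / (a * s1 + b * s2) * mgf M X s1 powr a * mgf M X s2 powr b"
      unfolding K_def c_def by simp
  next
    fix s1 s2 a b
    assume s1: "s1 \<in> {-s0<..<0}" and s2: "s2 \<in> {0<..<s0}"
      and H: "(a, b) \<in> cigf_domain M X \<and> a < 0 \<and> b < 0 \<and> 0 < a * s1 + b * s2"
    define c where "c = a * s1 + b * s2"
    define K where "K = mgf M X s1 powr a * mgf M X s2 powr b"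
    have K0: "K \<ge> 0" unfolding K_def by simp
    have pt: "K * exp (-c*x) \<le> rv_cdf M X x powr a * rv_surv M X x powr b" if "x > 0" for x
    proof -
      have k: "rv_cdf M X x \<le> mgf M X s1 * exp (-s1*x)" "rv_surv M X x \<le> mgf M X s2 * exp (-s2*x)"
        "mgf M X s1 > 0" "mgf M X s2 > 0" using key[OF s1 s2, of x] by auto
      have p1: "(mgf M X s1 * exp (-s1*x)) powr a \<le> rv_cdf M X x powr a"
        using k(1) Fp[OF that] H by (intro powr_mono2') auto
      have p2: "(mgf M X s2 * exp (-s2*x)) powr b \<le> rv_surv M X x powr b"
        using k(2) Sp[of x] H by (intro powr_mono2') auto
      have "K * exp (-c*x) = (mgf M X s1 * exp (-s1*x)) powr a * (mgf M X s2 * exp (-s2*x)) powr b"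
        using k(3,4) unfolding K_def c_def
        by (simp add: powr_mult exp_powr_real algebra_simps flip: exp_add)
      also have "\<dots> \<le> rv_cdf M X x powr a * rv_surv M X x powr b"
        using p1 p2 by (intro mult_mono) auto
      finally show ?thesis .
    qed
    have fin: "cigf_ext M X a b < \<infinity>" using H unfolding cigf_domain_def by auto
    have "ennreal (K / c) = (\<integral>\<^sup>+ x. indicator {x. 0 < x} x * ennreal (K * exp (-c*x)) \<partial>lborel)"
      using exp_int[of c K] H K0 unfolding c_def by simp
    also have "\<dots> \<le> cigf_ext M X a b"
      unfolding ext
      using pt by (intro nn_integral_mono) (auto split: split_indicator intro!: ennreal_leI)
    finally have "enn2real (ennreal (K / c)) \<le> cigf M X a b"
      unfolding cigf_def using fin by (intro enn2real_mono) auto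
    moreover have "enn2real (ennreal (K / c)) = K / c" using K0 H unfolding c_def by simp
    ultimately show "1 / (a * s1 + b * s2) * mgf M X s1 powr a * mgf M X s2 powr b \<le> cigf M X a b"
      unfolding K_def c_def by simp
  qed
qed

end
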